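(* Let $a_0,a_1,a_2,a_3\in\mathbb{R}$ and consider the binary quartic form $$f(x,y)=-x^4+a_3x^3y+a_2x^2y^2+a_1xy^3+a_0y^4 .$$ Let $$b_1=-\tfrac14\,(4a_0+a_2^2+a_1a_3),\qquad b_2=-\tfrac{a_2}{2},\qquad \lambda_0=\frac{4b_2+2\sqrt{3b_1+4b_2^2}}{3}.$$ Then $f$ is negative semi-definite if and only if $\lambda_0$ is real and the matrix $$\begin{bmatrix}-1&\frac{a_3}{2}&\frac{a_2+\lambda_0}{2}\\[2pt] \frac{a_3}{2}&-\lambda_0&\frac{a_1}{2}\\[2pt] \frac{a_2+\lambda_0}{2}&\frac{a_1}{2}&a_0\end{bmatrix}$$ is negative semi-definite. Likewise, $f$ is negative definite if and only if $\lambda_0$ is real and this matrix is negative definite.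
   Context: A binary form $f(x,y)$ with real coefficients is negative definite (resp. negative semi-definite) if $f(x,y)<0$ (resp. $f(x,y)\le 0$) for all real $x,y$ not both zero. The quantity $\lambda_0$ is real exactly when $3b_1+4b_2^2\ge 0$. *)

theory Defs
  imports "HOL-Analysis.Analysis"
begin

definition neg_semidef_form :: "(real \<Rightarrow> real \<Rightarrow> real) \<Rightarrow> bool" where
  "neg_semidef_form f \<longleftrightarrow> (\<forall>x y. (x, y) \<noteq> (0, 0) \<longrightarrow> f x y \<le> 0)"

definition neg_def_form :: "(real \<Rightarrow> real \<Rightarrow> real) \<Rightarrow> bool" where
  "neg_def_form f \<longleftrightarrow> (\<forall>x y. (x, y) \<noteq> (0, 0) \<longrightarrow> f x y < 0)"

definition neg_semidef_matrix :: "real^'n^'n \<Rightarrow> bool" where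
  "neg_semidef_matrix M \<longleftrightarrow> (\<forall>x. x \<bullet> (M *v x) \<le> 0)"

definition neg_def_matrix :: "real^'n^'n \<Rightarrow> bool" where
  "neg_def_matrix M \<longleftrightarrow> (\<forall>x. x \<noteq> 0 \<longrightarrow> x \<bullet> (M *v x) < 0)"

end

theory Submission
  imports Defs
begin


lemma psd2:
  fixes A B C y z :: real
  assumes "A \<ge> 0" "C \<ge> 0" "A*C - B^2 \<ge> 0"
  shows "A*y^2 + 2*B*y*z + C*z^2 \<ge> 0"
proof (cases "A = 0")
  case True
  then have "B^2 \<le> 0" using assms by simp
  then have "B = 0" by (smt (verit) zero_le_power2 power_eq_0_iff)
  then show ?thesis using True assms by simp
next
  case False
  then have Ap: "A > 0" using assms by simp
  have "A*(A*y^2 + 2*B*y*z + C*z^2) = (A*y + B*z)^2 + (A*C - B^2)*z^2"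
    by (simp add: power2_eq_square algebra_simps)
  also have "\<dots> \<ge> 0" using assms by simp
  finally show ?thesis using Ap by (simp add: zero_le_mult_iff)
qed

lemma pd2:
  fixes A B C y z :: real
  assumes "A > 0" "A*C - B^2 > 0" "A*y^2 + 2*B*y*z + C*z^2 \<le> 0"
  shows "y = 0 \<and> z = 0"
proof -
  have e: "A*(A*y^2 + 2*B*y*z + C*z^2) = (A*y + B*z)^2 + (A*C - B^2)*z^2"
    by (simp add: power2_eq_square algebra_simps)
  have "A*(A*y^2 + 2*B*y*z + C*z^2) \<le> 0" using assms by (simp add: mult_le_0_iff)
  then have "(A*y + B*z)^2 + (A*C - B^2)*z^2 \<le> 0" using e by simp
  moreover have "(A*C - B^2)*z^2 \<ge> 0" using assms by simp
  ultimately have "(A*C - B^2)*z^2 = 0" "(A*y + B*z)^2 = 0"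
    by (smt (verit) zero_le_power2)+
  then have "z = 0" using assms by simp
  then show ?thesis using \<open>(A*y + B*z)^2 = 0\<close> assms by simp
qed



lemma c5: fixes X Y Z c s A B C x0 :: real shows
 "X^2 + (c^2+A)*Y^2 - (-(s^2 + A*x0^2 - 2*B*x0 + C))*Z^2 - (2*c)*X*Y - (2* s)*X*Z - (-(2*c* s - 2*A*x0 + 2*B))*Y*Z = (X - c*Y - s*Z)^2 + (A*(Y - x0*Z)^2 + 2*B*(Y - x0*Z)*Z + C*Z^2)"
  by (simp add: algebra_simps power2_eq_square)
lemma ident_lem:
  fixes a0 a1 a2 a3 x0 u q m r lam z0 A B C c s X Y Z :: real
  assumes e3: "a3 = 2*(x0+u)" and e2: "a2 = -((x0+u)^2 + 2*x0*u + q)"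
    and e1: "a1 = 2*(x0+u)*x0*u + 2*q*x0" and e0: "a0 = -(x0^2*u^2 + q*x0^2 + m)"
    and lam: "lam = (4*(-a2/2) + 2*r)/3"
    and zv: "z0 = (2*r - q - (u-x0)^2)/3" and Av: "A = z0 + q" and Bv: "B = - (u-x0)*z0/2"
    and Cv: "C = m - z0^2/4" and cv: "c = a3/2" and sv: "s = (a2+lam)/2"
  shows "X^2 + lam*Y^2 - a0*Z^2 - a3*X*Y - (a2+lam)*X*Z - a1*Y*Z
     = (X - c*Y - s*Z)^2 + (A*(Y - x0*Z)^2 + 2*B*(Y - x0*Z)*Z + C*Z^2)"
proof -
  have sv': "s = (2*r - (x0+u)^2 - 2*x0*u - q)/6" unfolding sv lam e2 by (simp add: field_simps)
  have cv': "c = x0 + u" unfolding cv e3 by simp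
  have d1: "lam = c^2 + A" unfolding lam e2 cv' Av zv by (simp add: field_simps power2_eq_square)
  have d2: "a1 = -(2*c* s - 2*A*x0 + 2*B)" unfolding e1 cv' sv' Av Bv zv
    by (simp add: field_simps power2_eq_square)
  have d3: "a0 = -(s^2 + A*x0^2 - 2*B*x0 + C)" unfolding e0 sv' Av Bv Cv zv
    by (simp add: field_simps power2_eq_square)
  have d4: "a3 = 2*c" "a2 + lam = 2* s" unfolding cv sv by simp_all
  show ?thesis unfolding d4 d2 d3 unfolding d1 by (rule c5)
qed

lemma core:
  fixes a0 a1 a2 a3 x0 u q m r :: real
  assumes qq: "q \<ge> 0" and m: "m \<ge> 0"
    and e3: "a3 = 2*(x0+u)" and e2: "a2 = -((x0+u)^2 + 2*x0*u + q)"
    and e1: "a1 = 2*(x0+u)*x0*u + 2*q*x0" and e0: "a0 = -(x0^2*u^2 + q*x0^2 + m)"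
    and r: "r \<ge> 0" "r^2 = 3*(-(1/4)*(4*a0+a2^2+a1*a3)) + 4*(-a2/2)^2"
    and lam: "lam = (4*(-a2/2) + 2*r)/3"
  shows "X^2 + lam*Y^2 - a0*Z^2 - a3*X*Y - (a2+lam)*X*Z - a1*Y*Z \<ge> 0"
    and "m > 0 \<Longrightarrow> X^2 + lam*Y^2 - a0*Z^2 - a3*X*Y - (a2+lam)*X*Z - a1*Y*Z \<le> 0 \<Longrightarrow> X = 0 \<and> Y = 0 \<and> Z = 0"
proof -
  define w where "w = u - x0"
  define k where "k = q + w^2"
  define z0 where "z0 = (2*r - k)/3"
  have "3*(-(1/4)*(4*a0+a2^2+a1*a3)) + 4*(-a2/2)^2 = (k^2 + 12*m)/4"
    unfolding k_def w_def e0 e1 e2 e3 by (simp add: field_simps power2_eq_square)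
  then have r4: "4*r^2 = k^2 + 12*m" using r(2) by simp
  have k0: "k \<ge> 0" unfolding k_def using qq by simp
  have "k^2 \<le> (2*r)^2" using r4 m by (simp add: power_mult_distrib)
  then have "k \<le> 2*r" using r(1) power2_le_imp_le[of k "2*r"] by simp
  then have z0: "z0 \<ge> 0" unfolding z0_def by simp
  have key: "3*z0^2 + 2*k*z0 = 4*m"
  proof -
    have "3*z0^2 + 2*k*z0 = (4*r^2 - k^2)/3" unfolding z0_def by (simp add: power2_eq_square field_simps)
    then show ?thesis using r4 by simp
  qed
  define A where "A = z0 + q"
  define B where "B = - w*z0/2"
  define C where "C = m - z0^2/4"
  define c where "c = a3/2"
  define s where "s = (a2+lam)/2"
  have ident: "X^2 + lam*Y^2 - a0*Z^2 - a3*X*Y - (a2+lam)*X*Z - a1*Y*Z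
     = (X - c*Y - s*Z)^2 + (A*(Y - x0*Z)^2 + 2*B*(Y - x0*Z)*Z + C*Z^2)"
    by (rule ident_lem[OF e3 e2 e1 e0 lam _ A_def _ C_def c_def s_def])
       (simp_all add: z0_def k_def w_def B_def)
  have A0: "A \<ge> 0" unfolding A_def using z0 qq by simp
  have Ceq: "C = z0*(z0 + k)/2" using key unfolding C_def by (simp add: power2_eq_square field_simps)
  have C0: "C \<ge> 0" unfolding Ceq using k0 z0 by simp
  have det: "A*C - B^2 = z0/4*(2*(z0+q)^2 + w^2*z0 + 2*w^2*q)"
  proof -
    show ?thesis unfolding Ceq A_def B_def k_def by (simp add: power2_eq_square field_simps)
  qed
  have det0: "A*C - B^2 \<ge> 0" unfolding det using z0 qq by simp
  show "X^2 + lam*Y^2 - a0*Z^2 - a3*X*Y - (a2+lam)*X*Z - a1*Y*Z \<ge> 0"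
    unfolding ident using psd2[OF A0 C0 det0, of "Y - x0*Z" Z] by simp
  assume mp: "m > 0" and le: "X^2 + lam*Y^2 - a0*Z^2 - a3*X*Y - (a2+lam)*X*Z - a1*Y*Z \<le> 0"
  have "z0 \<noteq> 0" using key mp by auto
  then have z0p: "z0 > 0" using z0 by simp
  have Ap: "A > 0" unfolding A_def using z0p qq by simp
  have detp: "A*C - B^2 > 0"
  proof -
    have "2*(z0+q)^2 > 0" using z0p qq by simp
    moreover have "w^2*z0 + 2*w^2*q \<ge> 0" using z0p qq by simp
    ultimately have "2*(z0+q)^2 + w^2*z0 + 2*w^2*q > 0" by linarith
    then show ?thesis unfolding det using z0p by simp
  qed
  have q0: "A*(Y - x0*Z)^2 + 2*B*(Y - x0*Z)*Z + C*Z^2 \<ge> 0"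
    using psd2[OF A0 C0 det0, of "Y - x0*Z" Z] by simp
  have "A*(Y - x0*Z)^2 + 2*B*(Y - x0*Z)*Z + C*Z^2 \<le> 0" "(X - c*Y - s*Z)^2 \<le> 0"
    using le q0 unfolding ident by (smt (verit) zero_le_power2)+
  then have h1: "Y - x0*Z = 0 \<and> Z = 0" "X - c*Y - s*Z = 0"
    using pd2[OF Ap detp, of "Y - x0*Z" Z] by auto
  then show "X = 0 \<and> Y = 0 \<and> Z = 0" by auto
qed


lemma quartic_big:
  fixes a1 a2 a3 x :: real
  assumes "\<bar>x\<bar> \<ge> 1 + \<bar>a3\<bar> + \<bar>a2\<bar> + \<bar>a1\<bar>"
  shows "a3*x^3 + a2*x^2 + a1*x \<le> x^4"
proof -
  define t where "t = \<bar>x\<bar>"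
  have t1: "t \<ge> 1" using assms unfolding t_def by simp
  have h3: "a3*x^3 \<le> \<bar>a3\<bar>*t^3" unfolding t_def
    by (metis abs_ge_self abs_mult power_abs)
  have h2: "a2*x^2 \<le> \<bar>a2\<bar>*t^3"
  proof -
    have "a2*x^2 \<le> \<bar>a2\<bar>*t^2" unfolding t_def by (metis abs_ge_self abs_mult power_abs)
    also have "\<dots> \<le> \<bar>a2\<bar>*t^3" using t1 by (intro mult_left_mono) (auto intro: power_increasing)
    finally show ?thesis .
  qed
  have h1: "a1*x \<le> \<bar>a1\<bar>*t^3"
  proof -
    have "a1*x \<le> \<bar>a1\<bar>*t" unfolding t_def by (metis abs_ge_self abs_mult)
    also have "\<dots> \<le> \<bar>a1\<bar>*t^3" using t1 power_increasing[of 1 3 t] by (intro mult_left_mono) auto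
    finally show ?thesis .
  qed
  have "(\<bar>a3\<bar> + \<bar>a2\<bar> + \<bar>a1\<bar>)*t^3 \<le> t*t^3"
    using assms unfolding t_def by (intro mult_right_mono) auto
  moreover have "t*t^3 = x^4"
  proof -
    have "t*t^3 = t^4" by (simp add: power4_eq_xxxx power3_eq_cube)
    also have "\<dots> = x^4" unfolding t_def by (simp add: power_even_abs)
    finally show ?thesis .
  qed
  ultimately show ?thesis using h1 h2 h3 by (simp add: algebra_simps)
qed

lemma quartic_min:
  fixes a0 a1 a2 a3 :: real
  shows "\<exists>x0. \<forall>x. x0^4 - a3*x0^3 - a2*x0^2 - a1*x0 - a0 \<le> x^4 - a3*x^3 - a2*x^2 - a1*x - a0"
proof -
  define R where "R = 1 + \<bar>a3\<bar> + \<bar>a2\<bar> + \<bar>a1\<bar>"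
  define P where "P = (\<lambda>x::real. x^4 - a3*x^3 - a2*x^2 - a1*x - a0)"
  have "\<exists>x\<in>{-R..R}. \<forall>y\<in>{-R..R}. P x \<le> P y"
    by (rule continuous_attains_inf) (auto simp: R_def P_def intro!: continuous_intros)
  then obtain x0 where x0: "x0 \<in> {-R..R}" "\<And>y. y \<in> {-R..R} \<Longrightarrow> P x0 \<le> P y" by blast
  have R0: "R \<ge> 0" unfolding R_def by simp
  have "P x0 \<le> P x" for x
  proof (cases "\<bar>x\<bar> \<le> R")
    case True then show ?thesis using x0 by (auto simp: abs_le_iff)
  next
    case False
    have "P x0 \<le> P 0" using x0 R0 by auto
    also have "P 0 \<le> P x" using quartic_big[of a3 a2 a1 x] False unfolding P_def R_def by simp
    finally show ?thesis .
  qed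
  then show ?thesis unfolding P_def by blast
qed

lemma quad3:
  fixes x :: "real^3"
  shows "x \<bullet> ((vector [vector [p11,p12,p13], vector[p12,p22,p23], vector[p13,p23,p33]] :: real^3^3) *v x)
    = p11*(x$1)^2 + p22*(x$2)^2 + p33*(x$3)^2 + 2*p12*x$1*x$2 + 2*p13*x$1*x$3 + 2*p23*x$2*x$3"
  by (simp add: inner_vec_def matrix_vector_mult_def sum_3 power2_eq_square algebra_simps)

lemma nz3: fixes x :: "real^3" shows "x \<noteq> 0 \<longleftrightarrow> (x$1 \<noteq> 0 \<or> x$2 \<noteq> 0 \<or> x$3 \<noteq> 0)"
  by (simp add: vec_eq_iff forall_3)


lemma ppe: fixes x x0 u q m :: real shows
 "x^4 - (2*(x0+u))*x^3 - (-((x0+u)^2 + 2*x0*u + q))*x^2 - (2*(x0+u)*x0*u + 2*q*x0)*x - (-(x0^2*u^2 + q*x0^2 + m))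
  = (x-x0)^2*((x-u)^2 + q) + m"
  by (simp add: algebra_simps power2_eq_square power3_eq_cube power4_eq_xxxx)
lemma eeq: fixes x0 u q m :: real shows
 "3*(-(1/4)*(4*(-(x0^2*u^2 + q*x0^2 + m))+(-((x0+u)^2 + 2*x0*u + q))^2+(2*(x0+u)*x0*u + 2*q*x0)*(2*(x0+u)))) + 4*(-(-((x0+u)^2 + 2*x0*u + q))/2)^2
  = ((q + (u-x0)^2)^2 + 12*m)/4"
  by (simp add: field_simps power2_eq_square)

lemma hard:
  fixes a0 a1 a2 a3 :: real
  assumes P: "\<And>x. x^4 - a3*x^3 - a2*x^2 - a1*x - a0 \<ge> 0"
  defines "E \<equiv> 3*(-(1/4)*(4*a0+a2^2+a1*a3)) + 4*(-a2/2)^2"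
  defines "lam \<equiv> (4*(-a2/2) + 2 * sqrt E)/3"
  shows "E \<ge> 0"
    and "X^2 + lam*Y^2 - a0*Z^2 - a3*X*Y - (a2+lam)*X*Z - a1*Y*Z \<ge> 0"
    and "(\<And>x. x^4 - a3*x^3 - a2*x^2 - a1*x - a0 > 0) \<Longrightarrow>
         X^2 + lam*Y^2 - a0*Z^2 - a3*X*Y - (a2+lam)*X*Z - a1*Y*Z \<le> 0 \<Longrightarrow> X = 0 \<and> Y = 0 \<and> Z = 0"
proof -
  define PP where "PP = (\<lambda>x::real. x^4 - a3*x^3 - a2*x^2 - a1*x - a0)"
  obtain x0 where x0: "\<And>x. PP x0 \<le> PP x" using quartic_min[of a3 a2 a1 a0] unfolding PP_def by blast
  have "DERIV PP x0 :> (4*x0^3 - 3*a3*x0^2 - 2*a2*x0 - a1)"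
    unfolding PP_def by (auto intro!: derivative_eq_intros simp: power2_eq_square power3_eq_cube)
  then have d0: "4*x0^3 - 3*a3*x0^2 - 2*a2*x0 - a1 = 0"
    by (rule DERIV_local_min[of _ _ _ 1]) (use x0 in auto)
  have a1eq: "a1 = 4*x0^3 - 3*a3*x0^2 - 2*a2*x0" using d0 by simp
  define m where "m = PP x0"
  define u where "u = a3/2 - x0"
  define q where "q = (3*x0^2 - 2*a3*x0 - a2) - u^2"
  have e3: "a3 = 2*(x0+u)" unfolding u_def by simp
  have e2: "a2 = -((x0+u)^2 + 2*x0*u + q)" unfolding q_def u_def by (simp add: field_simps power2_eq_square)
  have e1: "a1 = 2*(x0+u)*x0*u + 2*q*x0" using d0 unfolding q_def u_def
    by (simp add: field_simps power2_eq_square power3_eq_cube)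
  have e0: "a0 = -(x0^2*u^2 + q*x0^2 + m)" unfolding m_def PP_def q_def u_def a1eq
    by (simp add: field_simps power2_eq_square power3_eq_cube power4_eq_xxxx)
  have m0: "m \<ge> 0" unfolding m_def PP_def using P by simp
  have PPe: "PP x - m = (x-x0)^2*((x-u)^2 + q)" for x
  proof -
    have "PP x = x^4 - a3*x^3 - a2*x^2 - a1*x - a0" unfolding PP_def by simp
    also have "\<dots> = (x-x0)^2*((x-u)^2 + q) + m" unfolding e0 e1 e2 e3
      by (rule ppe)
    finally show ?thesis by simp
  qed
  have q0: "q \<ge> 0"
  proof (rule ccontr)
    assume "\<not> q \<ge> 0"
    then have qn: "q < 0" by simp
    define t where "t = sqrt (-q)/2"
    have t2: "t^2 = -q/4" unfolding t_def using qn by (simp add: power_divide)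
    have tp: "t > 0" unfolding t_def using qn by simp
    obtain x where x: "x \<noteq> x0" "(x-u)^2 = t^2"
    proof (cases "u + t = x0")
      case True
      then show ?thesis using that[of "u - t"] tp by (simp add: power2_eq_square)
    next
      case False
      then show ?thesis using that[of "u + t"] by simp
    qed
    have "(x-u)^2 + q < 0" using x(2) t2 qn by simp
    moreover have "(x-x0)^2 > 0" using x(1) by simp
    ultimately have "(x-x0)^2*((x-u)^2 + q) < 0" by (simp add: mult_pos_neg)
    then have "PP x < m" using PPe[of x] by simp
    then show False using x0[of x] unfolding m_def by simp
  qed
  have Eeq: "E = ((q + (u-x0)^2)^2 + 12*m)/4" unfolding E_def e0 e1 e2 e3
    by (rule eeq)
  show E0: "E \<ge> 0" unfolding Eeq using m0 by simp
  have r: "sqrt E \<ge> 0" "(sqrt E)^2 = 3*(-(1/4)*(4*a0+a2^2+a1*a3)) + 4*(-a2/2)^2"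
    using E0 by (simp_all add: E_def)
  show "X^2 + lam*Y^2 - a0*Z^2 - a3*X*Y - (a2+lam)*X*Z - a1*Y*Z \<ge> 0"
    by (rule core(1)[OF q0 m0 e3 e2 e1 e0 r meta_eq_to_obj_eq[OF lam_def]])
  assume pos: "\<And>x. x^4 - a3*x^3 - a2*x^2 - a1*x - a0 > 0"
    and le: "X^2 + lam*Y^2 - a0*Z^2 - a3*X*Y - (a2+lam)*X*Z - a1*Y*Z \<le> 0"
  have mp: "m > 0" unfolding m_def PP_def using pos by simp
  show "X = 0 \<and> Y = 0 \<and> Z = 0" by (rule core(2)[OF q0 m0 e3 e2 e1 e0 r meta_eq_to_obj_eq[OF lam_def] mp le])
qed


theorem corollary1:
  fixes a0 a1 a2 a3 :: real
  defines "f \<equiv> (\<lambda>x y. - (x^4) + a3 * x^3 * y + a2 * x^2 * y^2 + a1 * x * y^3 + a0 * y^4)"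
      and "b1 \<equiv> - (1/4) * (4 * a0 + a2^2 + a1 * a3)"
      and "b2 \<equiv> - a2 / 2"
  defines "lam0 \<equiv> (4 * b2 + 2 * sqrt (3 * b1 + 4 * b2^2)) / 3"
  defines "M \<equiv> (vector [vector [-1, a3/2, (a2 + lam0)/2],
                          vector [a3/2, -lam0, a1/2],
                          vector [(a2 + lam0)/2, a1/2, a0]] :: real^3^3)"
  shows "(neg_semidef_form f \<longleftrightarrow> (3 * b1 + 4 * b2^2 \<ge> 0 \<and> neg_semidef_matrix M))
       \<and> (neg_def_form f \<longleftrightarrow> (3 * b1 + 4 * b2^2 \<ge> 0 \<and> neg_def_matrix M))"
proof -
  define Q where "Q = (\<lambda>X Y Z::real. X^2 + lam0*Y^2 - a0*Z^2 - a3*X*Y - (a2+lam0)*X*Z - a1*Y*Z)"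
  have Eeq: "3 * b1 + 4 * b2^2 = 3*(-(1/4)*(4*a0+a2^2+a1*a3)) + 4*(-a2/2)^2"
    unfolding b1_def b2_def by simp
  have lam0eq: "lam0 = (4*(-a2/2) + 2 * sqrt (3*(-(1/4)*(4*a0+a2^2+a1*a3)) + 4*(-a2/2)^2))/3"
    unfolding lam0_def b1_def b2_def by simp
  have QF: "v \<bullet> (M *v v) = - Q (v$1) (v$2) (v$3)" for v :: "real^3"
    unfolding M_def quad3 Q_def by (simp add: algebra_simps)
  have fv: "f x y = (vector [x^2, x*y, y^2] :: real^3) \<bullet> (M *v vector [x^2, x*y, y^2])" for x y
    unfolding QF Q_def f_def by (simp add: algebra_simps power2_eq_square power3_eq_cube power4_eq_xxxx)
  have vnz: "(vector [x^2, x*y, y^2] :: real^3) \<noteq> 0" if "(x,y) \<noteq> (0,0)" for x y :: real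
    using that by (auto simp: nz3)
  have Pf: "f x 1 = -(x^4 - a3*x^3 - a2*x^2 - a1*x - a0)" for x
    unfolding f_def by simp
  have H1: "3 * b1 + 4 * b2^2 \<ge> 0" if "\<And>x. x^4 - a3*x^3 - a2*x^2 - a1*x - a0 \<ge> 0"
    unfolding Eeq by (rule hard(1)[OF that])
  have H2: "Q X Y Z \<ge> 0" if "\<And>x. x^4 - a3*x^3 - a2*x^2 - a1*x - a0 \<ge> 0" for X Y Z
    unfolding Q_def lam0eq by (rule hard(2)[OF that])
  have H3: "X = 0 \<and> Y = 0 \<and> Z = 0" if "\<And>x. x^4 - a3*x^3 - a2*x^2 - a1*x - a0 > 0" "Q X Y Z \<le> 0" for X Y Z
  proof -
    have "\<And>x. x^4 - a3*x^3 - a2*x^2 - a1*x - a0 \<ge> 0" using that(1) less_imp_le by blast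
    then show ?thesis using hard(3)[of a3 a2 a1 a0 X Y Z] that unfolding Q_def lam0eq by blast
  qed
  have S: "neg_semidef_form f \<longleftrightarrow> (3 * b1 + 4 * b2^2 \<ge> 0 \<and> neg_semidef_matrix M)"
  proof
    assume nsd: "neg_semidef_form f"
    have P: "x^4 - a3*x^3 - a2*x^2 - a1*x - a0 \<ge> 0" for x
    proof -
      have "f x 1 \<le> 0" using nsd unfolding neg_semidef_form_def by simp
      then show ?thesis unfolding Pf by simp
    qed
    show "3 * b1 + 4 * b2^2 \<ge> 0 \<and> neg_semidef_matrix M"
      using H1[OF P] H2[OF P] unfolding neg_semidef_matrix_def QF by simp
  next
    assume "3 * b1 + 4 * b2^2 \<ge> 0 \<and> neg_semidef_matrix M"
    then show "neg_semidef_form f" unfolding neg_semidef_form_def neg_semidef_matrix_def fv by blast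
  qed
  have D: "neg_def_form f \<longleftrightarrow> (3 * b1 + 4 * b2^2 \<ge> 0 \<and> neg_def_matrix M)"
  proof
    assume nd: "neg_def_form f"
    have P: "x^4 - a3*x^3 - a2*x^2 - a1*x - a0 > 0" for x
    proof -
      have "f x 1 < 0" using nd unfolding neg_def_form_def by simp
      then show ?thesis unfolding Pf by simp
    qed
    have P': "x^4 - a3*x^3 - a2*x^2 - a1*x - a0 \<ge> 0" for x using P[of x] by simp
    have "v \<bullet> (M *v v) < 0" if "v \<noteq> 0" for v :: "real^3"
    proof (rule ccontr)
      assume "\<not> v \<bullet> (M *v v) < 0"
      then have "Q (v$1) (v$2) (v$3) \<le> 0" unfolding QF by simp
      then have "v$1 = 0 \<and> v$2 = 0 \<and> v$3 = 0" using H3[OF P] by blast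
      then show False using that by (simp add: nz3)
    qed
    then show "3 * b1 + 4 * b2^2 \<ge> 0 \<and> neg_def_matrix M"
      using H1[OF P'] unfolding neg_def_matrix_def by simp
  next
    assume "3 * b1 + 4 * b2^2 \<ge> 0 \<and> neg_def_matrix M"
    then show "neg_def_form f" unfolding neg_def_form_def neg_def_matrix_def fv using vnz by blast
  qed
  show ?thesis using S D by blast
qed

end
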